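(* The proof system $\mathbb{SKHM}$ is sound with respect to the class of all models: every formula of $\mathbf{L_{Khm}}$ derivable in $\mathbb{SKHM}$ is true at every state of every model.
   Context: Fix a countable set of proposition letters $\mathbf{P}$ and a countable non-empty set of action symbols $\Sigma$. The language $\mathbf{L_{Khm}}$ is given by $\phi ::= p \mid \neg\phi \mid (\phi\wedge\phi) \mid \mathcal{K}hm(\phi,\phi,\phi)$ with $p\in\mathbf{P}$; $\top,\bot,\vee,\to$ are the usual abbreviations, and $\mathcal{U}\phi$ abbreviates $\mathcal{K}hm(\neg\phi,\top,\bot)$. A model is a triple $(S,\mathcal{R},\mathcal{V})$ with $S$ a non-empty set, $\mathcal{R}:\Sigma\to 2^{S\times S}$, and $\mathcal{V}:S\to 2^{\mathbf{P}}$. Write $s\xrightarrow{a}t$ if $(s,t)\in\mathcal{R}(a)$; for $\sigma=a_1\cdots a_n\in\Sigma^*$ write $s\xrightarrow{\sigma}t$ if there are $s_2,\dots,s_n$ with $s\xrightarrow{a_1}s_2\xrightarrow{a_2}\cdots\xrightarrow{a_{n-1}}s_n\xrightarrow{a_n}t$ (for the empty sequence $\epsilon$, $s\xrightarrow{\epsilon}s$). Let $\sigma_k$ be the initial segment $a_1\cdots a_k$ ($\sigma_0=\epsilon$). $\sigma$ is strongly executable at $s'$ if for each $0\le k<n$, $s'\xrightarrow{\sigma_k}t$ implies $t$ has at least one $a_{k+1}$-successor. $\sigma$ is strongly $\chi$-executable at $s'$ if it is strongly executable at $s'$ and $s'\xrightarrow{\sigma_k}t$ implies $\mathcal{M},t\vDash\chi$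 for all $0<k<n$. Semantics: Booleans as usual, $\mathcal{M},s\vDash p$ iff $p\in\mathcal{V}(s)$, and $\mathcal{M},s\vDash\mathcal{K}hm(\psi,\chi,\phi)$ iff there is $\sigma\in\Sigma^*$ such that for every $s'$ with $\mathcal{M},s'\vDash\psi$, $\sigma$ is strongly $\chi$-executable at $s'$ and $\mathcal{M},t\vDash\phi$ for all $t$ with $s'\xrightarrow{\sigma}t$. The system $\mathbb{SKHM}$ has axioms: all propositional tautologies; DISTU: $\mathcal{U}p\wedge\mathcal{U}(p\to q)\to\mathcal{U}q$; TU: $\mathcal{U}p\to p$; 4KhmU: $\mathcal{K}hm(p,o,q)\to\mathcal{U}\mathcal{K}hm(p,o,q)$; 5KhmU: $\neg\mathcal{K}hm(p,o,q)\to\mathcal{U}\neg\mathcal{K}hm(p,o,q)$; EMPKhm: $\mathcal{U}(p\to q)\to\mathcal{K}hm(p,\bot,q)$; COMPKhm: $\mathcal{K}hm(p,o,r)\wedge\mathcal{K}hm(r,o,q)\wedge\mathcal{U}(r\to o)\to\mathcal{K}hm(p,o,q)$; ONEKhm: $\mathcal{K}hm(p,o,q)\wedge\neg\mathcal{K}hm(p,\bot,q)\to\mathcal{K}hm(p,\bot,o)$; UKhm: $\mathcal{U}(p'\to p)\wedge\mathcal{U}(o\to o')\wedge\mathcal{U}(q\to q')\wedge\mathcal{K}hm(p,o,q)\to\mathcal{K}hm(p',o',q')$; and rules MP (from $\varphi$ and $\varphi\to\psi$ infer $\psi$), NECU (from $\varphi$ infer $\mathcal{U}\varphi$), SUB (uniform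 substitution: from $\varphi(p)$ infer $\varphi[\psi/p]$). Here $p,q,r,o,p',q',o'$ are proposition letters. *)

theory Defs
  imports Main "HOL-Library.Countable"
begin

datatype ('p, 'a) form =
    Prop 'p
  | Neg "('p, 'a) form"
  | Conj "('p, 'a) form" "('p, 'a) form"
  | Khm "('p, 'a) form" "('p, 'a) form" "('p, 'a) form"

definition Top :: "('p, 'a) form" where
  "Top = Neg (Conj (Prop undefined) (Neg (Prop undefined)))"

definition Bot :: "('p, 'a) form" where
  "Bot = Neg Top"

definition Disj :: "('p, 'a) form \<Rightarrow> ('p, 'a) form \<Rightarrow> ('p, 'a) form" where
  "Disj a b = Neg (Conj (Neg a) (Neg b))"

definition Imp :: "('p, 'a) form \<Rightarrow> ('p, 'a) form \<Rightarrow> ('p, 'a) form" where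
  "Imp a b = Neg (Conj a (Neg b))"

definition U :: "('p, 'a) form \<Rightarrow> ('p, 'a) form" where
  "U \<phi> = Khm (Neg \<phi>) Top Bot"

text \<open>A model over state type 's: R a s t means s -a-> t; V s is the set of letters true at s.\<close>

fun reach :: "('a \<Rightarrow> 's \<Rightarrow> 's \<Rightarrow> bool) \<Rightarrow> 's \<Rightarrow> 'a list \<Rightarrow> 's \<Rightarrow> bool" where
  "reach R s [] t = (s = t)"
| "reach R s (a # \<sigma>) t = (\<exists>u. R a s u \<and> reach R u \<sigma> t)"

definition strongly_executable :: "('a \<Rightarrow> 's \<Rightarrow> 's \<Rightarrow> bool) \<Rightarrow> 'a list \<Rightarrow> 's \<Rightarrow> bool" where
  "strongly_executable R \<sigma> s' \<longleftrightarrow>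
     (\<forall>k < length \<sigma>. \<forall>t. reach R s' (take k \<sigma>) t \<longrightarrow> (\<exists>u. R (\<sigma> ! k) t u))"

definition strongly_chi_executable ::
  "('a \<Rightarrow> 's \<Rightarrow> 's \<Rightarrow> bool) \<Rightarrow> ('s \<Rightarrow> bool) \<Rightarrow> 'a list \<Rightarrow> 's \<Rightarrow> bool" where
  "strongly_chi_executable R \<chi> \<sigma> s' \<longleftrightarrow>
     strongly_executable R \<sigma> s' \<and>
     (\<forall>k. 0 < k \<and> k < length \<sigma> \<longrightarrow> (\<forall>t. reach R s' (take k \<sigma>) t \<longrightarrow> \<chi> t))"

primrec sat :: "('a \<Rightarrow> 's \<Rightarrow> 's \<Rightarrow> bool) \<Rightarrow> ('s \<Rightarrow> 'p set) \<Rightarrow> 's \<Rightarrow> ('p, 'a) form \<Rightarrow> bool" where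
  "sat R V s (Prop p) = (p \<in> V s)"
| "sat R V s (Neg \<phi>) = (\<not> sat R V s \<phi>)"
| "sat R V s (Conj \<phi> \<psi>) = (sat R V s \<phi> \<and> sat R V s \<psi>)"
| "sat R V s (Khm \<psi> \<chi> \<phi>) =
     (\<exists>\<sigma>. \<forall>s'. sat R V s' \<psi> \<longrightarrow>
         strongly_chi_executable R (\<lambda>t. sat R V t \<chi>) \<sigma> s' \<and>
         (\<forall>t. reach R s' \<sigma> t \<longrightarrow> sat R V t \<phi>))"

primrec peval :: "(('p, 'a) form \<Rightarrow> bool) \<Rightarrow> ('p, 'a) form \<Rightarrow> bool" where
  "peval v (Prop p) = v (Prop p)"
| "peval v (Neg \<phi>) = (\<not> peval v \<phi>)"
| "peval v (Conj \<phi> \<psi>) = (peval v \<phi> \<and> peval v \<psi>)"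
| "peval v (Khm a b c) = v (Khm a b c)"

definition tautology :: "('p, 'a) form \<Rightarrow> bool" where
  "tautology \<phi> \<longleftrightarrow> (\<forall>v. peval v \<phi>)"

primrec subst :: "'p \<Rightarrow> ('p, 'a) form \<Rightarrow> ('p, 'a) form \<Rightarrow> ('p, 'a) form" where
  "subst p \<psi> (Prop q) = (if q = p then \<psi> else Prop q)"
| "subst p \<psi> (Neg \<phi>) = Neg (subst p \<psi> \<phi>)"
| "subst p \<psi> (Conj \<phi>1 \<phi>2) = Conj (subst p \<psi> \<phi>1) (subst p \<psi> \<phi>2)"
| "subst p \<psi> (Khm a b c) = Khm (subst p \<psi> a) (subst p \<psi> b) (subst p \<psi> c)"

inductive axiom :: "('p, 'a) form \<Rightarrow> bool" where
  DISTU: "axiom (Imp (Conj (U (Prop p)) (U (Imp (Prop p) (Prop q)))) (U (Prop q)))"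
| TU: "axiom (Imp (U (Prop p)) (Prop p))"
| KhmU4: "axiom (Imp (Khm (Prop p) (Prop oo) (Prop q)) (U (Khm (Prop p) (Prop oo) (Prop q))))"
| KhmU5: "axiom (Imp (Neg (Khm (Prop p) (Prop oo) (Prop q)))
                      (U (Neg (Khm (Prop p) (Prop oo) (Prop q)))))"
| EMPKhm: "axiom (Imp (U (Imp (Prop p) (Prop q))) (Khm (Prop p) Bot (Prop q)))"
| COMPKhm: "axiom (Imp (Conj (Conj (Khm (Prop p) (Prop oo) (Prop r)) (Khm (Prop r) (Prop oo) (Prop q)))
                             (U (Imp (Prop r) (Prop oo))))
                       (Khm (Prop p) (Prop oo) (Prop q)))"
| ONEKhm: "axiom (Imp (Conj (Khm (Prop p) (Prop oo) (Prop q)) (Neg (Khm (Prop p) Bot (Prop q))))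
                      (Khm (Prop p) Bot (Prop oo)))"
| UKhm: "axiom (Imp (Conj (Conj (Conj (U (Imp (Prop p') (Prop p))) (U (Imp (Prop oo) (Prop oo'))))
                                   (U (Imp (Prop q) (Prop q'))))
                             (Khm (Prop p) (Prop oo) (Prop q)))
                       (Khm (Prop p') (Prop oo') (Prop q')))"

inductive derivable :: "('p, 'a) form \<Rightarrow> bool" where
  TAUT: "tautology \<phi> \<Longrightarrow> derivable \<phi>"
| AX: "axiom \<phi> \<Longrightarrow> derivable \<phi>"
| MP: "derivable \<phi> \<Longrightarrow> derivable (Imp \<phi> \<psi>) \<Longrightarrow> derivable \<psi>"
| NECU: "derivable \<phi> \<Longrightarrow> derivable (U \<phi>)"
| SUB: "derivable \<phi> \<Longrightarrow> derivable (subst p \<psi> \<phi>)"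

end

theory Submission
  imports Defs
begin

lemma sat_Imp[simp]: "sat R V s (Imp a b) = (sat R V s a \<longrightarrow> sat R V s b)"
  by (simp add: Imp_def)
lemma sat_Top[simp]: "sat R V s Top" by (simp add: Top_def)
lemma sat_Bot[simp]: "\<not> sat R V s Bot" by (simp add: Bot_def)

lemma reach_append: "reach R s (xs @ ys) t = (\<exists>u. reach R s xs u \<and> reach R u ys t)"
  by (induction xs arbitrary: s) auto

lemma reach_snoc: "reach R s (xs @ [a]) t = (\<exists>u. reach R s xs u \<and> R a u t)"
  by (simp add: reach_append)

lemma se_reach:
  assumes "strongly_executable R \<sigma> s"
  shows "\<exists>t. reach R s \<sigma> t"
proof -
  have "\<forall>k \<le> length \<sigma>. \<exists>t. reach R s (take k \<sigma>) t"
  proof (intro allI impI)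
    fix k assume "k \<le> length \<sigma>"
    then show "\<exists>t. reach R s (take k \<sigma>) t"
    proof (induction k)
      case 0 then show ?case by simp
    next
      case (Suc k)
      then obtain u where u: "reach R s (take k \<sigma>) u" by auto
      from Suc.prems have k: "k < length \<sigma>" by simp
      with u assms obtain t where "R (\<sigma> ! k) u t"
        unfolding strongly_executable_def by blast
      moreover have "take (Suc k) \<sigma> = take k \<sigma> @ [\<sigma> ! k]" using k by (simp add: take_Suc_conv_app_nth)
      ultimately show ?case using u by (auto simp: reach_snoc)
    qed
  qed
  then show ?thesis by fastforce
qed

lemma sat_U: "sat R V s (U \<phi>) = (\<forall>t. sat R V t \<phi>)"
  unfolding U_def
  by (auto simp: strongly_chi_executable_def dest: se_reach)

lemma peval_sat: "peval (sat R V s) \<phi> = sat R V s \<phi>"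
  by (induction \<phi>) auto

lemma sat_subst:
  "sat R V s (subst p \<psi> \<phi>) =
   sat R (\<lambda>t. if sat R V t \<psi> then insert p (V t) else V t - {p}) s \<phi>"
  by (induction \<phi> arbitrary: s) (auto simp: strongly_chi_executable_def)

lemma take_append_ge: "length xs \<le> k \<Longrightarrow> take k (xs @ ys) = xs @ take (k - length xs) ys"
  by simp

lemma comp_exec:
  assumes h1: "strongly_chi_executable R o1 \<sigma>1 s"
    and h2: "\<And>u. reach R s \<sigma>1 u \<Longrightarrow> strongly_chi_executable R o1 \<sigma>2 u \<and> o1 u"
  shows "strongly_chi_executable R o1 (\<sigma>1 @ \<sigma>2) s"
  unfolding strongly_chi_executable_def strongly_executable_def
proof (intro conjI allI impI)
  fix k t assume k: "k < length (\<sigma>1 @ \<sigma>2)" and r: "reach R s (take k (\<sigma>1 @ \<sigma>2)) t"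
  show "\<exists>u. R ((\<sigma>1 @ \<sigma>2) ! k) t u"
  proof (cases "k < length \<sigma>1")
    case True
    then show ?thesis using h1 r by (auto simp: strongly_chi_executable_def strongly_executable_def nth_append)
  next
    case False
    then obtain u where u: "reach R s \<sigma>1 u" and r2: "reach R u (take (k - length \<sigma>1) \<sigma>2) t"
      using r by (auto simp: reach_append)
    have "k - length \<sigma>1 < length \<sigma>2" using k False by simp
    then show ?thesis using h2[OF u] r2 False
      by (auto simp: strongly_chi_executable_def strongly_executable_def nth_append)
  qed
next
  fix k t assume k: "0 < k \<and> k < length (\<sigma>1 @ \<sigma>2)" and r: "reach R s (take k (\<sigma>1 @ \<sigma>2)) t"
  show "o1 t"
  proof (cases "k < length \<sigma>1")
    case True
    then show ?thesis using h1 r k by (auto simp: strongly_chi_executable_def)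
  next
    case False
    then obtain u where u: "reach R s \<sigma>1 u" and r2: "reach R u (take (k - length \<sigma>1) \<sigma>2) t"
      using r by (auto simp: reach_append)
    show ?thesis
    proof (cases "k = length \<sigma>1")
      case True
      then show ?thesis using r2 h2[OF u] by simp
    next
      case F2: False
      have "0 < k - length \<sigma>1" "k - length \<sigma>1 < length \<sigma>2" using k False F2 by auto
      then show ?thesis using h2[OF u] r2 unfolding strongly_chi_executable_def by blast
    qed
  qed
qed

lemma axiom_sound: "axiom \<phi> \<Longrightarrow> sat R V s \<phi>"
proof (induction rule: axiom.induct)
  case (DISTU p q) then show ?case by (simp add: sat_U)
next
  case (TU p) then show ?case by (simp add: sat_U)
next
  case (KhmU4 p oo q) then show ?case by (simp add: sat_U)
next
  case (KhmU5 p oo q) then show ?case by (simp add: sat_U)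
next
  case (EMPKhm p q) then show ?case
    by (simp add: sat_U) (intro impI exI[of _ "[]"], auto simp: strongly_chi_executable_def strongly_executable_def)
next
  case (COMPKhm p oo r q)
  show ?case
  proof (simp only: sat_Imp, intro impI)
    assume "sat R V s (Conj (Conj (Khm (Prop p) (Prop oo) (Prop r)) (Khm (Prop r) (Prop oo) (Prop q)))
                             (U (Imp (Prop r) (Prop oo))))"
    then obtain \<sigma>1 \<sigma>2 where
      s1: "\<forall>s'. p \<in> V s' \<longrightarrow> strongly_chi_executable R (\<lambda>t. oo \<in> V t) \<sigma>1 s' \<and> (\<forall>t. reach R s' \<sigma>1 t \<longrightarrow> r \<in> V t)"
      and s2: "\<forall>s'. r \<in> V s' \<longrightarrow> strongly_chi_executable R (\<lambda>t. oo \<in> V t) \<sigma>2 s' \<and> (\<forall>t. reach R s' \<sigma>2 t \<longrightarrow> q \<in> V t)"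
      and ro: "\<forall>t. r \<in> V t \<longrightarrow> oo \<in> V t"
      by (auto simp: sat_U)
    show "sat R V s (Khm (Prop p) (Prop oo) (Prop q))"
    proof (simp, rule exI[of _ "\<sigma>1 @ \<sigma>2"], intro allI impI)
      fix s' assume ps: "p \<in> V s'"
      have "strongly_chi_executable R (\<lambda>t. oo \<in> V t) (\<sigma>1 @ \<sigma>2) s'"
        by (rule comp_exec) (use s1 s2 ro ps in blast)+
      moreover have "\<forall>t. reach R s' (\<sigma>1 @ \<sigma>2) t \<longrightarrow> q \<in> V t"
        using s1 s2 ps by (auto simp: reach_append)
      ultimately show "strongly_chi_executable R (\<lambda>t. oo \<in> V t) (\<sigma>1 @ \<sigma>2) s' \<and> (\<forall>t. reach R s' (\<sigma>1 @ \<sigma>2) t \<longrightarrow> q \<in> V t)" by blast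
    qed
  qed
next
  case (ONEKhm p oo q)
  show ?case
  proof (simp only: sat_Imp, intro impI)
    assume "sat R V s (Conj (Khm (Prop p) (Prop oo) (Prop q)) (Neg (Khm (Prop p) Bot (Prop q))))"
    then obtain \<sigma> where
      s1: "\<forall>s'. p \<in> V s' \<longrightarrow> strongly_chi_executable R (\<lambda>t. oo \<in> V t) \<sigma> s' \<and> (\<forall>t. reach R s' \<sigma> t \<longrightarrow> q \<in> V t)"
      and n: "\<forall>\<sigma>'. \<exists>s'. p \<in> V s' \<and> \<not> (strongly_chi_executable R (\<lambda>t. sat R V t Bot) \<sigma>' s' \<and> (\<forall>t. reach R s' \<sigma>' t \<longrightarrow> q \<in> V t))"
      by auto
    have long: "length \<sigma> > 1"
    proof (rule ccontr)
      assume "\<not> length \<sigma> > 1"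
      then have "\<And>s'. strongly_chi_executable R (\<lambda>t. oo \<in> V t) \<sigma> s' \<Longrightarrow> strongly_chi_executable R (\<lambda>t. sat R V t Bot) \<sigma> s'"
        by (auto simp: strongly_chi_executable_def)
      then show False using n[rule_format, of \<sigma>] s1 by blast
    qed
    then obtain a \<tau> where st: "\<sigma> = a # \<tau>" and tn: "\<tau> \<noteq> []" by (cases \<sigma>) auto
    show "sat R V s (Khm (Prop p) Bot (Prop oo))"
    proof (simp, rule exI[of _ "[a]"], intro allI impI)
      fix s' assume ps: "p \<in> V s'"
      from s1 ps have se: "strongly_chi_executable R (\<lambda>t. oo \<in> V t) \<sigma> s'" by blast
      then have "\<exists>u. R a s' u" using st
        by (auto simp: strongly_chi_executable_def strongly_executable_def)
      then have A: "strongly_chi_executable R (\<lambda>t. False) [a] s'"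
        by (auto simp: strongly_chi_executable_def strongly_executable_def)
      have B: "\<forall>t. reach R s' [a] t \<longrightarrow> oo \<in> V t"
      proof (intro allI impI)
        fix t assume "reach R s' [a] t"
        then have "reach R s' (take 1 \<sigma>) t" using st by simp
        then show "oo \<in> V t" using se long by (auto simp: strongly_chi_executable_def)
      qed
      show "strongly_chi_executable R (\<lambda>t. False) [a] s' \<and> (\<forall>t. reach R s' [a] t \<longrightarrow> oo \<in> V t)"
        using A B by blast
    qed
  qed
next
  case (UKhm p' p oo oo' q q')
  then show ?case
    by (auto simp: sat_U strongly_chi_executable_def) blast
qed

lemma sound: "derivable \<phi> \<Longrightarrow> \<forall>V s. sat R V s \<phi>"
proof (induction rule: derivable.induct)
  case (TAUT \<phi>) then show ?case by (metis peval_sat tautology_def)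
next
  case (AX \<phi>) then show ?case by (intro allI) (rule axiom_sound)
next
  case (MP \<phi> \<psi>) then show ?case by simp
next
  case (NECU \<phi>) then show ?case by (simp add: sat_U)
next
  case (SUB \<phi> p \<psi>) then show ?case by (simp add: sat_subst)
qed

theorem mainTheorem1:
  fixes \<phi> :: "('p::countable, 'a::countable) form"
    and R :: "'a \<Rightarrow> 's \<Rightarrow> 's \<Rightarrow> bool" and V :: "'s \<Rightarrow> 'p set" and s :: 's
  assumes "derivable \<phi>"
  shows "sat R V s \<phi>"
  using sound[OF assms, of R, rule_format] .

end
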